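(* Let $\alpha>0$, $\beta\in\mathbb{R}$, $\gamma>0$, $d\ge1$, $c\in\mathbb{R}$, write $x=\alpha(z-\beta)$, and let $$Q(z)=\frac{\operatorname{sign}(x)}{d+1}|x|^{d+1}+c\,x,\qquad q(z)=Q'(z)=\alpha\big[|x|^d+c\big],\qquad p(z)=\frac{1}{1+e^{-Q(z)/\gamma}}.$$ Let $H(z)=\gamma\log(1+e^{Q(z)/\gamma})$ and $\mathcal{L}_m(\hat s,s)=H(\hat s)-H(s)-(\hat s-s)H'(s)$. If $c\ge\max\{\sqrt{2\gamma d},\,\gamma d-\tfrac12\}$, then $\mathcal{L}_m(\hat s,s)$ is convex in $\hat s\in\mathbb{R}$ for every $s\in\mathbb{R}$ (i.e. a convex selective matching loss with this scaling exists).
   Context: $H$ is the $\gamma$-regularized composite Softplus primitive, with link $H'(z)=q(z)p(z)$. *)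

theory Defs
  imports "HOL-Analysis.Analysis"
begin

definition Qf :: "real \<Rightarrow> real \<Rightarrow> real \<Rightarrow> real \<Rightarrow> real \<Rightarrow> real" where
  "Qf al be d c z = (let x = al * (z - be) in
     sgn x / (d + 1) * \<bar>x\<bar> powr (d + 1) + c * x)"

definition qf :: "real \<Rightarrow> real \<Rightarrow> real \<Rightarrow> real \<Rightarrow> real \<Rightarrow> real" where
  "qf al be d c z = al * (\<bar>al * (z - be)\<bar> powr d + c)"

definition pf :: "real \<Rightarrow> real \<Rightarrow> real \<Rightarrow> real \<Rightarrow> real \<Rightarrow> real \<Rightarrow> real" where
  "pf al be ga d c z = 1 / (1 + exp (- Qf al be d c z / ga))"

definition Hf :: "real \<Rightarrow> real \<Rightarrow> real \<Rightarrow> real \<Rightarrow> real \<Rightarrow> real \<Rightarrow> real" where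
  "Hf al be ga d c z = ga * ln (1 + exp (Qf al be d c z / ga))"

text \<open>Matching loss, with the link H'(s) = q(s) p(s).\<close>
definition Lm :: "real \<Rightarrow> real \<Rightarrow> real \<Rightarrow> real \<Rightarrow> real \<Rightarrow> real \<Rightarrow> real \<Rightarrow> real" where
  "Lm al be ga d c sh s = Hf al be ga d c sh - Hf al be ga d c s
      - (sh - s) * (qf al be d c s * pf al be ga d c s)"

end

theory Submission
  imports Defs
begin

lemma phi_deriv:
  fixes d x :: real assumes d: "d > 0"
  shows "((\<lambda>y. y * \<bar>y\<bar> powr d) has_real_derivative (d+1) * \<bar>x\<bar> powr d) (at x)"
proof -
  consider "x > 0" | "x < 0" | "x = 0" by linarith
  then show ?thesis
  proof cases
    case 1
    have "((\<lambda>y. y * y powr d) has_real_derivative (d+1) * \<bar>x\<bar> powr d) (at x)"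
      by (rule DERIV_cong[OF DERIV_mult[OF DERIV_ident has_real_derivative_powr[OF 1]]])
         (use 1 in \<open>simp add: powr_diff field_simps\<close>)
    then show ?thesis
      by (rule has_field_derivative_transform_within_open[where S="{0<..}"]) (use 1 in auto)
  next
    case 2
    have m: "0 < -x" using 2 by simp
    have dm: "((\<lambda>y. (-y) powr d) has_real_derivative d * (-x) powr (d - 1) * (-1)) (at x)"
      using DERIV_chain2[of "\<lambda>z. z powr d" _ "uminus" x, OF has_real_derivative_powr[OF m]] 2
      by (auto intro!: derivative_eq_intros)
    have "((\<lambda>y. y * (-y) powr d) has_real_derivative (d+1) * \<bar>x\<bar> powr d) (at x)"
      by (rule DERIV_cong[OF DERIV_mult[OF DERIV_ident dm]])
         (use 2 in \<open>simp add: powr_diff field_simps\<close>)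
    then show ?thesis
      by (rule has_field_derivative_transform_within_open[where S="{..<0}"]) (use 2 in auto)
  next
    case 3
    have ab: "((\<lambda>y. \<bar>y\<bar>) \<longlongrightarrow> 0) (at (0::real))"
      using tendsto_rabs[OF tendsto_ident_at[of "0::real" UNIV]] by simp
    have lim: "((\<lambda>y. \<bar>y\<bar> powr d) \<longlongrightarrow> 0 powr d) (at (0::real))"
      by (intro tendsto_powr' tendsto_intros ab) (use d in auto)
    have ev: "\<forall>\<^sub>F y in at (0::real). \<bar>y\<bar> powr d = (y * \<bar>y\<bar> powr d - 0 * \<bar>0\<bar> powr d) / (y - 0)"
      by (auto simp: eventually_at_filter)
    have "((\<lambda>y. (y * \<bar>y\<bar> powr d - 0 * \<bar>0\<bar> powr d) / (y - 0)) \<longlongrightarrow> 0) (at (0::real))"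
      using Lim_transform_eventually[OF lim ev] by simp
    then show ?thesis using 3 d by (simp add: has_field_derivative_iff)
  qed
qed


lemma Qf_phi: "Qf al be d c z = (al*(z-be)) * \<bar>al*(z-be)\<bar> powr d / (d+1) + c * (al*(z-be))"
  if "d > 0" for al be d c z :: real
proof -
  have "sgn x * \<bar>x\<bar> powr (d+1) = x * \<bar>x\<bar> powr d" for x :: real
  proof (cases "x = 0")
    case False
    then have "\<bar>x\<bar> powr (d+1) = \<bar>x\<bar> powr d * \<bar>x\<bar>" by (simp add: powr_add)
    have "sgn x * \<bar>x\<bar> = x" by (cases x "0::real" rule: linorder_cases) auto
    then show ?thesis using \<open>\<bar>x\<bar> powr (d+1) = _\<close> by (metis mult.assoc mult.commute)
  qed simp
  then show ?thesis unfolding Qf_def Let_def by simp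
qed

lemma Qf_deriv:
  fixes al be d c z :: real assumes "d > 0"
  shows "((Qf al be d c) has_real_derivative qf al be d c z) (at z)"
proof -
  have e: "Qf al be d c = (\<lambda>z. (al*(z-be)) * \<bar>al*(z-be)\<bar> powr d / (d+1) + c * (al*(z-be)))"
    using Qf_phi[OF assms] by auto
  have ph: "((\<lambda>z. (al*(z-be)) * \<bar>al*(z-be)\<bar> powr d) has_real_derivative ((d+1) * \<bar>al*(z-be)\<bar> powr d) * al) (at z)"
  proof -
    have ident: "((\<lambda>z. al*(z-be)) has_real_derivative al) (at z)"
      by (auto intro!: derivative_eq_intros)
    show ?thesis using DERIV_chain2[OF phi_deriv[OF assms] ident] by simp
  qed
  show ?thesis unfolding e
    by (rule DERIV_cong[OF DERIV_add[OF DERIV_cdivide[OF ph] DERIV_cmult[of "\<lambda>z. al*(z-be)"]]])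
       (use assms in \<open>auto intro!: derivative_eq_intros simp: qf_def field_simps\<close>)
qed

lemma Hf_deriv:
  fixes al be ga d c z :: real assumes "d > 0" "ga > 0"
  shows "((Hf al be ga d c) has_real_derivative qf al be d c z * pf al be ga d c z) (at z)"
proof -
  have e: "Hf al be ga d c = (\<lambda>z. ga * ln (1 + exp (Qf al be d c z / ga)))"
    by (auto simp: Hf_def)
  have ex: "exp (Qf al be d c z / ga) / (1 + exp (Qf al be d c z / ga)) = 1 / (1 + exp (- Qf al be d c z / ga))"
    by (simp add: exp_minus field_simps add_pos_pos)
  have gz: "ga \<noteq> 0" using assms by simp
  have pos: "1 + exp (Qf al be d c z / ga) > 0" by (simp add: add_pos_pos)
  have "((\<lambda>z. ga * ln (1 + exp (Qf al be d c z / ga))) has_real_derivative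
     ga * ((exp (Qf al be d c z / ga) * (qf al be d c z / ga)) / (1 + exp (Qf al be d c z / ga)))) (at z)"
    by (rule derivative_eq_intros Qf_deriv[OF assms(1)] refl pos gz | simp)+
  then show ?thesis unfolding e
  proof (rule DERIV_cong)
    have "ga * ((exp (Qf al be d c z / ga) * (qf al be d c z / ga)) / (1 + exp (Qf al be d c z / ga)))
      = qf al be d c z * (exp (Qf al be d c z / ga) / (1 + exp (Qf al be d c z / ga)))"
      using gz pos by (simp add: divide_simps)
    then show "ga * ((exp (Qf al be d c z / ga) * (qf al be d c z / ga)) / (1 + exp (Qf al be d c z / ga)))
      = qf al be d c z * pf al be ga d c z" unfolding pf_def ex .
  qed
qed


lemma c_facts:
  fixes ga d c :: real
  assumes "ga > 0" "d \<ge> 1" "c \<ge> max (sqrt (2 * ga * d)) (ga * d - 1 / 2)"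
  shows "c \<ge> 0" "c^2 \<ge> 2*ga*d" "c \<ge> ga*d/2"
proof -
  have s: "c \<ge> sqrt (2*ga*d)" using assms(3) by simp
  have p: "2*ga*d \<ge> 0" using assms by simp
  show c0: "c \<ge> 0" using s p by (meson order_trans real_sqrt_ge_zero)
  show "c^2 \<ge> 2*ga*d" using s p c0
    by (metis power_mono real_sqrt_ge_zero real_sqrt_pow2)
  show "c \<ge> ga*d/2"
  proof (cases "ga*d \<le> 8")
    case True
    have "(ga*d/2)^2 \<le> 2*ga*d"
    proof -
      have "(ga*d/2)^2 = (ga*d) * (ga*d) / 4" by (simp add: power2_eq_square)
      also have "\<dots> \<le> (ga*d) * 8 / 4" using True p by (intro divide_right_mono mult_left_mono) (auto simp: mult.commute)
      finally show ?thesis by (simp add: mult.commute mult.left_commute)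
    qed
    then have "ga*d/2 \<le> sqrt (2*ga*d)" by (rule real_le_rsqrt)
    then show ?thesis using s by linarith
  next
    case False
    then show ?thesis using assms(3) by simp
  qed
qed

lemma key_ineq:
  fixes ga d c t :: real
  assumes "ga > 0" "d \<ge> 1" "c \<ge> max (sqrt (2 * ga * d)) (ga * d - 1 / 2)" "t > 0"
  shows "2*ga*d * t powr (d-1) \<le> (t powr d + c)^2"
proof -
  note cf = c_facts[OF assms(1-3)]
  have tp: "t powr d \<ge> 0" by simp
  show ?thesis
  proof (cases "t \<le> 1")
    case True
    have "t powr (d-1) \<le> 1" using True assms by (intro powr_le1) auto
    then have "2*ga*d * t powr (d-1) \<le> 2*ga*d" using assms by (simp add: mult_left_le)
    also have "\<dots> \<le> c^2" using cf by simp
    also have "\<dots> \<le> (t powr d + c)^2" using tp cf by (intro power_mono) auto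
    finally show ?thesis .
  next
    case False
    have "t powr (d-1) \<le> t powr d" using False by (intro powr_mono) auto
    then have "2*ga*d * t powr (d-1) \<le> 2*ga*d * t powr d" using assms by (intro mult_left_mono) auto
    also have "\<dots> \<le> 4*c * t powr d" using cf tp by (intro mult_right_mono) (auto simp: mult.commute)
    also have "\<dots> \<le> (t powr d + c)^2"
    proof -
      have "0 \<le> (t powr d - c)^2" by simp
      then show ?thesis by (simp add: power2_eq_square algebra_simps)
    qed
    finally show ?thesis .
  qed
qed


definition Rf :: "real \<Rightarrow> real \<Rightarrow> real \<Rightarrow> real" where
  "Rf d c t = t powr (d+1) / (d+1) + c * t"

definition Gf :: "real \<Rightarrow> real \<Rightarrow> real \<Rightarrow> real \<Rightarrow> real" where
  "Gf ga d c t = (t powr d + c) / (1 + exp (Rf d c t / ga))"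

definition Ff :: "real \<Rightarrow> real \<Rightarrow> real \<Rightarrow> real \<Rightarrow> real" where
  "Ff ga d c t = (t powr d + c) / (1 + exp (- Rf d c t / ga))"

lemma Ff_mono:
  fixes ga d c a b :: real
  assumes "ga > 0" "d > 0" "c \<ge> 0" "0 \<le> a" "a \<le> b"
  shows "Ff ga d c a \<le> Ff ga d c b"
  unfolding Ff_def
proof (rule frac_le)
  have pa: "a powr d \<le> b powr d" using assms by (intro powr_mono2) auto
  show "0 \<le> b powr d + c" using assms by simp
  show "a powr d + c \<le> b powr d + c" using pa by simp
  show "0 < 1 + exp (- Rf d c b / ga)" by (simp add: add_pos_pos)
  have "a powr (d+1) \<le> b powr (d+1)" using assms by (intro powr_mono2) auto
  moreover have "c * a \<le> c * b" using assms by (intro mult_left_mono) auto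
  ultimately have "Rf d c a \<le> Rf d c b" unfolding Rf_def using assms
    by (intro add_mono divide_right_mono) auto
  then have "- Rf d c b / ga \<le> - Rf d c a / ga" using assms by (intro divide_right_mono) auto
  then show "1 + exp (- Rf d c b / ga) \<le> 1 + exp (- Rf d c a / ga)" by simp
qed

lemma Gf_deriv_nonpos:
  fixes ga d c t :: real
  assumes "ga > 0" "d \<ge> 1" "c \<ge> max (sqrt (2 * ga * d)) (ga * d - 1 / 2)" "t > 0"
  shows "\<exists>y. DERIV (Gf ga d c) t :> y \<and> y \<le> 0"
proof -
  note cf = c_facts[OF assms(1-3)]
  define E where "E = exp (Rf d c t / ga)"
  have gz: "ga \<noteq> 0" using assms by simp
  define N where "N = t powr d + c"
  have dp: "((\<lambda>t. t powr d) has_real_derivative d * t powr (d-1)) (at t)"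
    by (rule has_real_derivative_powr[OF assms(4)])
  have dp1: "((\<lambda>t. t powr (d+1)) has_real_derivative (d+1) * t powr d) (at t)"
    using has_real_derivative_powr[OF assms(4), of "d+1"] by simp
  have dR: "(Rf d c has_real_derivative N) (at t)"
  proof -
    have "((\<lambda>t. t powr (d+1) / (d+1) + c * t) has_real_derivative (d+1) * t powr d / (d+1) + c * 1) (at t)"
      by (intro DERIV_add DERIV_cdivide dp1 DERIV_cmult DERIV_ident)
    then show ?thesis using assms unfolding Rf_def N_def [symmetric]
      by (simp add: N_def Rf_def[abs_def])
  qed
  have dE: "((\<lambda>t. 1 + exp (Rf d c t / ga)) has_real_derivative E * (N / ga)) (at t)"
    unfolding E_def
    apply (rule DERIV_cong)
     apply (rule derivative_eq_intros dR refl gz)+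
    using gz by (simp add: field_simps)
  have Epos: "E > 0" unfolding E_def by simp
  have dG: "(Gf ga d c has_real_derivative
      ((d * t powr (d-1)) * (1 + E) - N * (E * (N / ga))) / ((1 + E) * (1 + E))) (at t)"
  proof -
    have "((\<lambda>t. (t powr d + c) / (1 + exp (Rf d c t / ga))) has_real_derivative
      ((d * t powr (d-1) + 0) * (1 + exp (Rf d c t / ga)) - (t powr d + c) * (E * (N / ga))) /
        ((1 + exp (Rf d c t / ga)) * (1 + exp (Rf d c t / ga)))) (at t)"
      by (intro DERIV_divide DERIV_add dp DERIV_const dE) (use Epos E_def in \<open>simp add: add_pos_pos add_nonneg_eq_0_iff\<close>)
    then show ?thesis unfolding Gf_def[abs_def] E_def[symmetric] N_def[symmetric] by simp
  qed
  have Rnn: "Rf d c t \<ge> 0" unfolding Rf_def using assms cf by simp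
  have E1: "E \<ge> 1" unfolding E_def using Rnn assms by simp
  have k: "2*ga*d * t powr (d-1) \<le> N^2" unfolding N_def by (rule key_ineq[OF assms])
  have "ga * (d * t powr (d-1) * (1 + E)) \<le> ga * (d * t powr (d-1) * (2 * E))"
    using E1 assms by (intro mult_left_mono) auto
  also have "\<dots> = (2*ga*d * t powr (d-1)) * E" by simp
  also have "\<dots> \<le> N^2 * E" using k Epos by (intro mult_right_mono) auto
  finally have "ga * (d * t powr (d-1) * (1 + E)) \<le> N^2 * E" .
  then have "d * t powr (d-1) * (1 + E) \<le> N * (E * (N / ga))"
    using assms by (simp add: field_simps power2_eq_square)
  then have "((d * t powr (d-1)) * (1 + E) - N * (E * (N / ga))) / ((1 + E) * (1 + E)) \<le> 0"
    using Epos by (intro divide_nonpos_pos) (auto simp: add_pos_pos)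
  with dG show ?thesis by blast
qed


lemma Gf_cont:
  fixes ga d c a b :: real
  assumes "ga > 0" "d > 0" "0 \<le> a"
  shows "continuous_on {a..b} (Gf ga d c)"
proof -
  have c1: "continuous_on {a..b} (\<lambda>t::real. t powr d)"
    by (rule continuous_on_powr') (use assms in \<open>auto intro: continuous_intros\<close>)
  have c2: "continuous_on {a..b} (\<lambda>t::real. t powr (d+1))"
    by (rule continuous_on_powr') (use assms in \<open>auto intro: continuous_intros\<close>)
  have "continuous_on {a..b} (\<lambda>t. (t powr d + c) / (1 + exp ((t powr (d+1) / (d+1) + c * t) / ga)))"
    using assms by (intro continuous_on_divide continuous_on_add continuous_on_const c1 c2
        continuous_on_exp continuous_on_mult continuous_on_id)
      (auto simp: add_pos_pos add_nonneg_eq_0_iff)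
  then show ?thesis unfolding Gf_def[abs_def] Rf_def .
qed

lemma Gf_antimono:
  fixes ga d c a b :: real
  assumes "ga > 0" "d \<ge> 1" "c \<ge> max (sqrt (2 * ga * d)) (ga * d - 1 / 2)" "0 \<le> a" "a \<le> b"
  shows "Gf ga d c b \<le> Gf ga d c a"
  by (rule DERIV_nonpos_imp_decreasing_open[OF assms(5)])
     (use assms Gf_deriv_nonpos Gf_cont in auto)

lemma powr_succ: "t \<ge> 0 \<Longrightarrow> t powr (d+1) = t * t powr d" for t d :: real
  by (cases "t = 0") (simp_all add: powr_add)

lemma Qf_left:
  fixes al be d c z :: real assumes "al > 0" "d > 0" "z \<le> be"
  shows "Qf al be d c z = - Rf d c (al * (be - z))"
proof -
  define t where "t = al * (be - z)"
  have e: "al * (z - be) = - t" unfolding t_def by (simp add: algebra_simps)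
  have "t \<ge> 0" using assms unfolding t_def by simp
  then show ?thesis unfolding Qf_phi[OF assms(2)] Rf_def e t_def[symmetric]
    by (simp add: powr_succ)
qed

lemma Qf_right:
  fixes al be d c z :: real assumes "al > 0" "d > 0" "z \<ge> be"
  shows "Qf al be d c z = Rf d c (al * (z - be))"
proof -
  have "al * (z - be) \<ge> 0" using assms by simp
  then show ?thesis unfolding Qf_phi[OF assms(2)] Rf_def
    by (simp add: powr_succ)
qed


lemma g_left:
  fixes al be ga d c z :: real assumes "al > 0" "d > 0" "z \<le> be"
  shows "qf al be d c z * pf al be ga d c z = al * Gf ga d c (al * (be - z))"
proof -
  have a: "\<bar>al * (z - be)\<bar> = al * (be - z)" using assms by (simp add: abs_if algebra_simps)
  show ?thesis unfolding qf_def pf_def Gf_def Qf_left[OF assms] a by simp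
qed

lemma g_right:
  fixes al be ga d c z :: real assumes "al > 0" "d > 0" "z \<ge> be"
  shows "qf al be d c z * pf al be ga d c z = al * Ff ga d c (al * (z - be))"
proof -
  have a: "\<bar>al * (z - be)\<bar> = al * (z - be)" using assms by simp
  show ?thesis unfolding qf_def pf_def Ff_def Qf_right[OF assms] a by simp
qed

lemma g_mono:
  fixes al be ga d c :: real
  assumes al: "al > 0" and ga: "ga > 0" and d: "d \<ge> 1"
    and c: "c \<ge> max (sqrt (2 * ga * d)) (ga * d - 1 / 2)"
    and le: "z1 \<le> z2"
  shows "qf al be d c z1 * pf al be ga d c z1 \<le> qf al be d c z2 * pf al be ga d c z2"
proof -
  have d0: "d > 0" using d by simp
  note cf = c_facts[OF ga d c]
  have L: "qf al be d c x * pf al be ga d c x \<le> qf al be d c y * pf al be ga d c y"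
    if "x \<le> y" "y \<le> be" for x y
  proof -
    have "Gf ga d c (al * (be - x)) \<le> Gf ga d c (al * (be - y))"
      using that al by (intro Gf_antimono[OF ga d c]) (auto intro: mult_left_mono)
    then show ?thesis unfolding g_left[OF al d0 that(2)] g_left[OF al d0 order_trans[OF that]]
      using al by simp
  qed
  have R: "qf al be d c x * pf al be ga d c x \<le> qf al be d c y * pf al be ga d c y"
    if "x \<le> y" "be \<le> x" for x y
  proof -
    have "Ff ga d c (al * (x - be)) \<le> Ff ga d c (al * (y - be))"
      using that al cf by (intro Ff_mono[OF ga d0]) (auto intro: mult_left_mono)
    then show ?thesis unfolding g_right[OF al d0 that(2)] g_right[OF al d0 order_trans[OF that(2,1)]]
      using al by simp
  qed
  consider "z2 \<le> be" | "be \<le> z1" | "z1 \<le> be" "be \<le> z2" by linarith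
  then show ?thesis
  proof cases
    case 1 then show ?thesis using L le by blast
  next
    case 2 then show ?thesis using R le by blast
  next
    case 3 then show ?thesis using L[OF 3(1) order_refl] R[OF 3(2) order_refl] by linarith
  qed
qed

theorem corollaryG5:
  fixes al be ga d c :: real
  assumes "al > 0" and "ga > 0" and "d \<ge> 1"
    and "c \<ge> max (sqrt (2 * ga * d)) (ga * d - 1 / 2)"
  shows "\<forall>s. convex_on UNIV (\<lambda>sh. Lm al be ga d c sh s)"
proof
  fix s
  have d0: "d > 0" using assms by simp
  let ?k = "qf al be d c s * pf al be ga d c s"
  show "convex_on UNIV (\<lambda>sh. Lm al be ga d c sh s)"
  proof (rule convex_on_realI[where f' = "\<lambda>sh. qf al be d c sh * pf al be ga d c sh - ?k"])
    show "connected (UNIV :: real set)" by simp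
  next
    fix x :: real
    have "((\<lambda>sh. Hf al be ga d c sh - Hf al be ga d c s - (sh - s) * ?k) has_real_derivative
        qf al be d c x * pf al be ga d c x - 0 - ?k) (at x)"
    proof (intro DERIV_diff DERIV_const Hf_deriv[OF d0 assms(2)])
      show "((\<lambda>sh. (sh - s) * ?k) has_real_derivative ?k) (at x)"
        by (auto intro!: derivative_eq_intros)
    qed
    then show "((\<lambda>sh. Lm al be ga d c sh s) has_real_derivative
        qf al be d c x * pf al be ga d c x - ?k) (at x)"
      unfolding Lm_def by simp
  next
    fix x y :: real assume "x \<le> y"
    then show "qf al be d c x * pf al be ga d c x - ?k \<le> qf al be d c y * pf al be ga d c y - ?k"
      using g_mono[OF assms] by simp
  qed
qed

end
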